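(* Let $\boldsymbol X=A\times_{\max}\boldsymbol Z$ be a recursive max-linear model on a DAG $\mathcal D=(V,E)$ satisfying Assumptions A, fix any $a>1$, and let $O\subseteq V$ satisfy $\mathrm{An}(O)\cap(V\setminus O)=\emptyset$. For $j\in V\setminus O$, we have $\mathrm{an}(j)\cap(V\setminus O)=\emptyset$ if and only if $$\sigma^2_{M_{i,aj,aO}}-\sigma^2_{M_{i,j,O}}=(a^2-1)\sigma^2_{M_{j,O}}\quad\text{for all } i\in V\setminus(O\cup\{j\}).\qquad(\ast)$$ If $j\in V\setminus O$ has an ancestor in $V\setminus O$, then $\sigma^2_{M_{i,aj,aO}}-\sigma^2_{M_{i,j,O}}\le(a^2-1)\sigma^2_{M_{j,O}}$ for all $i\in V\setminus(O\cup\{j\})$, with strict inequality whenever $i\in (V\setminus O)\cap\mathrm{an}(j)$. Finally, if two distinct nodes $j_1,j_2\in V\setminus O$ both satisfy $(\ast)$, then $j_1\notin\mathrm{an}(j_2)$ and $j_2\notin\mathrm{an}(j_1)$.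
   Context: Let $\mathcal D=(V,E)$ be a directed acyclic graph with $V=\{1,\dots,d\}$; $\mathrm{pa}(i)$, $\mathrm{an}(i)$, $\mathrm{de}(i)$ denote parents, ancestors (nodes with a directed path to $i$) and descendants of $i$, $\mathrm{An}(i)=\mathrm{an}(i)\cup\{i\}$, $\mathrm{An}(U)=\bigcup_{u\in U}\mathrm{An}(u)$; $\vee$ denotes maximum. A recursive max-linear model (RMLM) on $\mathcal D$ is the unique solution of $X_i=\bigvee_{k\in\mathrm{pa}(i)}c_{ik}X_k\vee c_{ii}Z_i$, $i\in V$, with edge weights $c_{ik}>0$ ($k\in \mathrm{pa}(i)$), $c_{ii}>0$; it equals $X_i=(A\times_{\max}\boldsymbol Z)_i=\bigvee_{j\in V}a_{ij}Z_j$ where $a_{ii}=c_{ii}$, $a_{ij}$ for $j\in\mathrm{an}(i)$ is the maximum over all directed paths $j=\ell_0\to\ell_1\to\dots\to\ell_m=i$ of $c_{jj}c_{\ell_1\ell_0}\cdots c_{\ell_m\ell_{m-1}}$, and $a_{ij}=0$ for $j\notin\mathrm{An}(i)$. Assumptions A: (A1) $Z_1,\dots,Z_d$ are independent, nonnegative, atom-free, with $n\,\mathbb P(n^{-1/2}Z_i>z)\to z^{-2}$ as $n\to\infty$ for all $z>0$; (A2) the norm is the Euclidean norm $\|\cdot\|$; (A3) $A$ is standardised, i.e. each row is divided by its Euclidean norm so that $\sum_{j\in V}a_{ij}^2=1$ for all $i$ (the model is taken as $\boldsymbol X=A\times_{\max}\boldsymbol Z$ with this standardised $A$). Under these assumptions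 it is known that $a_{ij}>0$ iff $j\in\mathrm{An}(i)$, and $a_{jj}>a_{ij}$ for all $i\neq j$. Angular measure: with columns $\boldsymbol a_k$ of $A$, $\boldsymbol X$ has angular measure $H_{\boldsymbol X}=\sum_{k\in V}\|\boldsymbol a_k\|^2\delta_{\boldsymbol a_k/\|\boldsymbol a_k\|}$ on $\Theta^{d-1}_+=\{\boldsymbol\omega\in[0,\infty)^d:\|\boldsymbol\omega\|=1\}$. For weights $b_1,\dots,b_d\ge0$, the squared scaling of the max-projection $Y=\bigvee_k b_kX_k$ is $\sigma_Y^2=\int_{\Theta^{d-1}_+}\bigvee_k b_k^2\omega_k^2\,dH_{\boldsymbol X}(\boldsymbol\omega)$. Notation: for $a\ge1$, $O\subseteq V$, $i,j\notin O$: $M_{i,aj,aO}=X_i\vee aX_j\vee\bigvee_{k\in O}aX_k$, $M_{i,j,O}=X_i\vee X_j\vee\bigvee_{k\in O}X_k$, $M_{j,O}=X_j\vee\bigvee_{k\in O}X_k$. *)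

theory Defs
  imports Main "HOL-Analysis.Analysis"
begin

text \<open>DAG on a finite node type 'v (V = UNIV). An edge (k, i) \<in> E means k \<rightarrow> i,
  i.e. k is a parent of i.\<close>

definition pa :: "('v \<times> 'v) set \<Rightarrow> 'v \<Rightarrow> 'v set" where
  "pa E i = {k. (k, i) \<in> E}"

definition an :: "('v \<times> 'v) set \<Rightarrow> 'v \<Rightarrow> 'v set" where
  "an E i = {j. (j, i) \<in> E\<^sup>+}"

definition An :: "('v \<times> 'v) set \<Rightarrow> 'v set \<Rightarrow> 'v set" where
  "An E U = (\<Union>u\<in>U. an E u \<union> {u})"

definition dpath :: "('v \<times> 'v) set \<Rightarrow> 'v list \<Rightarrow> 'v \<Rightarrow> 'v \<Rightarrow> bool" where
  "dpath E p j i \<longleftrightarrow> p \<noteq> [] \<and> hd p = j \<and> last p = i \<and>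
     (\<forall>t < length p - 1. (p ! t, p ! Suc t) \<in> E)"

definition path_weight :: "('v \<Rightarrow> 'v \<Rightarrow> real) \<Rightarrow> 'v list \<Rightarrow> real" where
  "path_weight c p = c (hd p) (hd p) * (\<Prod>t < length p - 1. c (p ! Suc t) (p ! t))"

definition ml_coeff :: "('v \<times> 'v) set \<Rightarrow> ('v \<Rightarrow> 'v \<Rightarrow> real) \<Rightarrow> 'v \<Rightarrow> 'v \<Rightarrow> real" where
  "ml_coeff E c i j =
     (if i = j then c i i
      else if j \<in> an E i then Sup {path_weight c p | p. dpath E p j i \<and> length p \<ge> 2}
      else 0)"

definition std_coeff :: "('v::finite \<times> 'v) set \<Rightarrow> ('v \<Rightarrow> 'v \<Rightarrow> real) \<Rightarrow> 'v \<Rightarrow> 'v \<Rightarrow> real" where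
  "std_coeff E c i j = ml_coeff E c i j / sqrt (\<Sum>l\<in>UNIV. (ml_coeff E c i l)\<^sup>2)"

definition col_norm :: "('v::finite \<Rightarrow> 'v \<Rightarrow> real) \<Rightarrow> 'v \<Rightarrow> real" where
  "col_norm A k = sqrt (\<Sum>l\<in>UNIV. (A l k)\<^sup>2)"

text \<open>Integral of f w.r.t. the angular measure
  H_X = \<Sum>_k ||a_k||^2 \<delta>_{a_k/||a_k||} of X = A \<times>max Z.\<close>
definition angular_integral :: "('v::finite \<Rightarrow> 'v \<Rightarrow> real) \<Rightarrow> (('v \<Rightarrow> real) \<Rightarrow> real) \<Rightarrow> real" where
  "angular_integral A f = (\<Sum>k\<in>UNIV. (col_norm A k)\<^sup>2 * f (\<lambda>l. A l k / col_norm A k))"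

text \<open>Squared scaling of the max-projection Y = \<Or>_k b_k X_k.\<close>
definition sigma2 :: "('v::finite \<Rightarrow> 'v \<Rightarrow> real) \<Rightarrow> ('v \<Rightarrow> real) \<Rightarrow> real" where
  "sigma2 A b = angular_integral A (\<lambda>\<omega>. MAX l\<in>UNIV. (b l)\<^sup>2 * (\<omega> l)\<^sup>2)"

text \<open>Weights of M_{i, s j, s Obs} = X_i \<or> s X_j \<or> \<Or>_{k\<in>Obs} s X_k.\<close>
definition wM3 :: "'v \<Rightarrow> real \<Rightarrow> 'v \<Rightarrow> 'v set \<Rightarrow> 'v \<Rightarrow> real" where
  "wM3 i s j Obs = (\<lambda>k. max (if k = i then 1 else 0) (if k = j \<or> k \<in> Obs then s else 0))"

text \<open>Weights of M_{j,Obs} = X_j \<or> \<Or>_{k\<in>Obs} X_k.\<close>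
definition wM2 :: "'v \<Rightarrow> 'v set \<Rightarrow> 'v \<Rightarrow> real" where
  "wM2 j Obs = (\<lambda>k. if k = j \<or> k \<in> Obs then 1 else 0)"

definition cond_star :: "('v::finite \<Rightarrow> 'v \<Rightarrow> real) \<Rightarrow> real \<Rightarrow> 'v set \<Rightarrow> 'v \<Rightarrow> bool" where
  "cond_star A a Obs j \<longleftrightarrow>
     (\<forall>i \<in> UNIV - (Obs \<union> {j}).
        sigma2 A (wM3 i a j Obs) - sigma2 A (wM3 i 1 j Obs) = (a\<^sup>2 - 1) * sigma2 A (wM2 j Obs))"

end

theory Submission
  imports Defs
begin


lemma dpath_trancl:
  assumes "dpath E p j i" "s < t" "t < length p"
  shows "(p!s, p!t) \<in> E\<^sup>+"
  using assms(2,3)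
proof (induction t)
  case 0 then show ?case by simp
next
  case (Suc t)
  have e: "(p!t, p!Suc t) \<in> E" using assms(1) Suc.prems unfolding dpath_def by auto
  show ?case
  proof (cases "s = t")
    case True then show ?thesis using e by auto
  next
    case False
    then have "(p!s, p!t) \<in> E\<^sup>+" using Suc by auto
    then show ?thesis using e by (meson trancl.trancl_into_trancl)
  qed
qed

lemma dpath_distinct:
  assumes "acyclic E" "dpath E p j i"
  shows "distinct p"
proof -
  { fix s t assume st: "s < t" "t < length p" "p!s = p!t"
    then have "(p!s, p!s) \<in> E\<^sup>+" using dpath_trancl[OF assms(2) st(1,2)] by simp
    then have False using assms(1) unfolding acyclic_def by blast }
  then show ?thesis unfolding distinct_conv_nth by (metis linorder_neqE_nat order.strict_trans)
qed

lemma finite_paths: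
  assumes "acyclic E"
  shows "finite {p. dpath E p j (i::'v::finite)}"
proof -
  have "{p. dpath E p j i} \<subseteq> {xs. set xs \<subseteq> UNIV \<and> length xs \<le> card (UNIV::'v set)}"
  proof
    fix p assume "p \<in> {p. dpath E p j i}"
    then have "distinct p" using dpath_distinct[OF assms] by auto
    then have "length p = card (set p)" by (simp add: distinct_card)
    also have "\<dots> \<le> card (UNIV::'v set)" by (rule card_mono[OF finite_class.finite_UNIV subset_UNIV])
    finally show "p \<in> {xs. set xs \<subseteq> UNIV \<and> length xs \<le> card (UNIV::'v set)}" by simp
  qed
  then show ?thesis by (rule finite_subset) (rule finite_lists_length_le[OF finite_class.finite_UNIV])
qed

lemma dpath_snoc:
  assumes "dpath E p j y" "(y, z) \<in> E"
  shows "dpath E (p @ [z]) j z"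
  unfolding dpath_def
proof (intro conjI allI impI)
  have p: "p \<noteq> []" "hd p = j" "last p = y" using assms(1) unfolding dpath_def by auto
  show "p @ [z] \<noteq> []" by simp
  show "hd (p @ [z]) = j" using p by simp
  show "last (p @ [z]) = z" by simp
  fix t assume t: "t < length (p @ [z]) - 1"
  show "((p @ [z]) ! t, (p @ [z]) ! Suc t) \<in> E"
  proof (cases "Suc t < length p")
    case True
    then show ?thesis using assms(1) unfolding dpath_def by (auto simp: nth_append)
  next
    case False
    then have st: "Suc t = length p" using t by simp
    then have "t < length p" by simp
    then have "(p@[z])!t = p ! t" by (simp add: nth_append)
    also have "p ! t = last p"
    proof -
      have "t = length p - 1" using st by simp
      then show ?thesis using p(1) by (simp add: last_conv_nth)
    qed
    finally have 1: "(p@[z])!t = y" using p by simp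
    have 2: "(p@[z])!Suc t = z" using st by (simp add: nth_append)
    show ?thesis using 1 2 assms(2) by simp
  qed
qed

lemma dpath_edge: "(j, i) \<in> E \<Longrightarrow> dpath E [j, i] j i"
  unfolding dpath_def by auto

lemma path_exists:
  assumes "(j, i) \<in> E\<^sup>+"
  shows "\<exists>p. dpath E p j i \<and> length p \<ge> 2"
  using assms
proof (induction rule: trancl_induct)
  case (base y) then show ?case using dpath_edge by fastforce
next
  case (step y z)
  then obtain p where "dpath E p j y" "length p \<ge> 2" by blast
  then show ?case using dpath_snoc[OF _ step(2)] by force
qed

lemma path_weight_snoc:
  assumes "p \<noteq> []"
  shows "path_weight c (p @ [z]) = path_weight c p * c z (last p)"
proof -
  obtain n where n: "length p = Suc n" using assms by (cases p) auto
  have "(\<Prod>t < length (p@[z]) - 1. c ((p@[z]) ! Suc t) ((p@[z]) ! t))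
      = (\<Prod>t < Suc n. c ((p@[z]) ! Suc t) ((p@[z]) ! t))" using n by simp
  also have "\<dots> = (\<Prod>t < n. c ((p@[z]) ! Suc t) ((p@[z]) ! t)) * c z (last p)"
    using n assms by (simp add: nth_append last_conv_nth)
  also have "(\<Prod>t < n. c ((p@[z]) ! Suc t) ((p@[z]) ! t)) = (\<Prod>t < length p - 1. c (p ! Suc t) (p ! t))"
    using n by (intro prod.cong) (auto simp: nth_append)
  finally show ?thesis unfolding path_weight_def using assms by (simp add: mult.assoc)
qed

lemma path_weight_pos:
  assumes "dpath E p j i" "\<And>k i. (k, i) \<in> E \<Longrightarrow> c i k > 0" "\<And>i. c i i > 0"
  shows "path_weight c p > 0"
  unfolding path_weight_def using assms unfolding dpath_def
  by (intro mult_pos_pos prod_pos) auto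

lemma dpath_split:
  assumes "dpath E p j i" "length p \<ge> 2"
  shows "dpath E (butlast p) j (last (butlast p)) \<and> (last (butlast p), i) \<in> E \<and> p = butlast p @ [i]
         \<and> butlast p \<noteq> []"
proof -
  have p: "p \<noteq> []" "hd p = j" "last p = i" "\<forall>t < length p - 1. (p ! t, p ! Suc t) \<in> E"
    using assms(1) unfolding dpath_def by auto
  let ?q = "butlast p"
  have q: "?q \<noteq> []" using assms(2) by (cases p rule: rev_cases) auto
  have pe: "p = ?q @ [i]" using p by (metis append_butlast_last_id)
  have lq: "length ?q = length p - 1" by simp
  have "hd ?q = j" using p q pe by (metis hd_append2)
  moreover have "\<forall>t < length ?q - 1. (?q ! t, ?q ! Suc t) \<in> E"
    using p(4) by (auto simp: nth_butlast)
  moreover have "(last ?q, i) \<in> E"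
  proof -
    have "(p ! (length p - 2), p ! Suc (length p - 2)) \<in> E" using p(4) assms(2) by auto
    moreover have "p ! (length p - 2) = last ?q" using q assms(2)
      by (simp add: last_conv_nth nth_butlast numeral_2_eq_2)
    moreover have "p ! Suc (length p - 2) = i" using p assms(2)
      by (simp add: last_conv_nth Suc_diff_Suc numeral_2_eq_2)
    ultimately show ?thesis by simp
  qed
  ultimately show ?thesis using q pe unfolding dpath_def by auto
qed

lemma an_irrefl: "acyclic E \<Longrightarrow> j \<notin> an E j"
  unfolding an_def acyclic_def by auto

lemma an_trans: "j \<in> an E k \<Longrightarrow> k \<in> an E i \<Longrightarrow> j \<in> an E i"
  unfolding an_def by auto

lemma an_edge: "(k, i) \<in> E \<Longrightarrow> k \<in> an E i"
  unfolding an_def by auto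

context
  fixes E :: "('v::finite \<times> 'v) set" and c :: "'v \<Rightarrow> 'v \<Rightarrow> real"
  assumes dag: "acyclic E"
    and edge_pos: "\<And>k i. (k, i) \<in> E \<Longrightarrow> c i k > 0"
    and diag_pos: "\<And>i. c i i > 0"
begin

lemma W_finite: "finite {path_weight c p | p. dpath E p j i \<and> length p \<ge> 2}"
proof -
  have "{path_weight c p | p. dpath E p j i \<and> length p \<ge> 2} = path_weight c ` {p. dpath E p j i \<and> length p \<ge> 2}"
    by auto
  moreover have "finite {p. dpath E p j i \<and> length p \<ge> 2}"
    using finite_paths[OF dag, of j i] by (rule finite_subset[rotated]) auto
  ultimately show ?thesis by simp
qed

lemma ml_an:
  assumes "j \<in> an E i"
  shows "\<exists>p. dpath E p j i \<and> length p \<ge> 2 \<and> ml_coeff E c i j = path_weight c p"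
    and "\<And>q. dpath E q j i \<Longrightarrow> length q \<ge> 2 \<Longrightarrow> path_weight c q \<le> ml_coeff E c i j"
proof -
  let ?W = "{path_weight c p | p. dpath E p j i \<and> length p \<ge> 2}"
  have ij: "i \<noteq> j" using assms an_irrefl[OF dag] by auto
  have ml: "ml_coeff E c i j = Sup ?W" using ij assms unfolding ml_coeff_def by simp
  have ne: "?W \<noteq> {}" using path_exists[of j i E] assms unfolding an_def by auto
  have fin: "finite ?W" by (rule W_finite)
  have sm: "Sup ?W = Max ?W" using fin ne by (rule cSup_eq_Max)
  have "Max ?W \<in> ?W" using fin ne by (rule Max_in)
  then show "\<exists>p. dpath E p j i \<and> length p \<ge> 2 \<and> ml_coeff E c i j = path_weight c p"
    using ml sm by auto
  fix q assume "dpath E q j i" "length q \<ge> 2"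
  then have "path_weight c q \<in> ?W" by auto
  then show "path_weight c q \<le> ml_coeff E c i j" using ml sm fin by simp
qed

lemma ml_diag: "ml_coeff E c i i = c i i"
  unfolding ml_coeff_def by simp

lemma ml_zero: "k \<noteq> i \<Longrightarrow> k \<notin> an E i \<Longrightarrow> ml_coeff E c i k = 0"
  unfolding ml_coeff_def by simp

lemma ml_an_pos:
  assumes "k \<in> an E i" shows "ml_coeff E c i k > 0"
proof -
  obtain p where p: "dpath E p k i" "ml_coeff E c i k = path_weight c p" using ml_an(1)[OF assms] by blast
  have "path_weight c p > 0" using p(1) by (rule path_weight_pos) (simp_all add: edge_pos diag_pos)
  then show ?thesis using p by simp
qed

lemma ml_nonneg: "ml_coeff E c i k \<ge> 0"
  using ml_an_pos[of k i] ml_zero[of k i] ml_diag[of i] diag_pos[of i]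
  by (cases "k = i"; cases "k \<in> an E i") auto

lemma ml_pos_iff: "ml_coeff E c i k > 0 \<longleftrightarrow> k = i \<or> k \<in> an E i"
  using ml_an_pos[of k i] ml_zero[of k i] ml_diag[of i] diag_pos[of i]
  by (cases "k = i"; cases "k \<in> an E i") auto

lemma edge_ne: "(l, i) \<in> E \<Longrightarrow> l \<noteq> i"
  using dag unfolding acyclic_def by blast

lemma ml_step:
  assumes e: "(l, i) \<in> E"
  shows "c i l * ml_coeff E c l k \<le> ml_coeff E c i k"
proof -
  have lan: "l \<in> an E i" using e by (rule an_edge)
  consider "k = l" | "k \<in> an E l" | "k \<noteq> l \<and> k \<notin> an E l" by blast
  then show ?thesis
  proof cases
    case 1
    have "dpath E [l,i] l i" by (rule dpath_edge[OF e])
    then have "path_weight c [l,i] \<le> ml_coeff E c i l" using ml_an(2)[OF lan] by simp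
    moreover have "path_weight c [l,i] = c l l * c i l" unfolding path_weight_def by simp
    ultimately show ?thesis using 1 ml_diag[of l] by (simp add: mult.commute)
  next
    case 2
    have kan: "k \<in> an E i" using an_trans[OF 2 lan] .
    obtain q where q: "dpath E q k l" "length q \<ge> 2" "ml_coeff E c l k = path_weight c q"
      using ml_an(1)[OF 2] by blast
    have lq: "last q = l" "q \<noteq> []" using q unfolding dpath_def by auto
    have "dpath E (q@[i]) k i" by (rule dpath_snoc[OF q(1) e])
    moreover have "length (q@[i]) \<ge> 2" using q by simp
    ultimately have "path_weight c (q@[i]) \<le> ml_coeff E c i k" using ml_an(2)[OF kan] by blast
    moreover have "path_weight c (q@[i]) = path_weight c q * c i l" using path_weight_snoc[OF lq(2)] lq(1) by simp
    ultimately show ?thesis using q(3) by (simp add: mult.commute)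
  next
    case 3
    then have "ml_coeff E c l k = 0" using ml_zero by blast
    then show ?thesis using ml_nonneg[of i k] by simp
  qed
qed

lemma ml_back:
  assumes jan: "j \<in> an E i"
  shows "\<exists>l. (l, i) \<in> E \<and> (l = j \<or> j \<in> an E l) \<and> ml_coeff E c i j \<le> c i l * ml_coeff E c l j"
proof -
  obtain p where p: "dpath E p j i" "length p \<ge> 2" "ml_coeff E c i j = path_weight c p"
    using ml_an(1)[OF jan] by blast
  define q where "q = butlast p"
  define l where "l = last q"
  have s: "dpath E q j l" "(l, i) \<in> E" "p = q @ [i]" "q \<noteq> []"
    using dpath_split[OF p(1,2)] unfolding q_def l_def by auto
  have w: "path_weight c p = path_weight c q * c i l"
    using path_weight_snoc[OF s(4), of c i] s(3) unfolding l_def by simp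
  have cpos: "c i l > 0" using edge_pos[OF s(2)] .
  show ?thesis
  proof (cases "length q \<ge> 2")
    case True
    have hq: "q ! 0 = j" "q ! (length q - 1) = l" using s(1) s(4) unfolding dpath_def
      by (auto simp: hd_conv_nth last_conv_nth)
    have "(q ! 0, q ! (length q - 1)) \<in> E\<^sup>+" using dpath_trancl[OF s(1), of 0 "length q - 1"] True by simp
    then have jl: "j \<in> an E l" using hq unfolding an_def by simp
    have "path_weight c q \<le> ml_coeff E c l j" using ml_an(2)[OF jl s(1) True] .
    then have "ml_coeff E c i j \<le> c i l * ml_coeff E c l j" using p(3) w cpos
      by (simp add: mult.commute mult_left_mono)
    then show ?thesis using s(2) jl by blast
  next
    case False
    have "length q > 0" using s(4) by simp
    then have "length q = 1" using False by linarith
    then obtain x where x: "q = [x]" by (metis One_nat_def length_0_conv length_Suc_conv)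
    then have xj: "x = j" using s(1) unfolding dpath_def by simp
    have lj: "l = j" using x xj unfolding l_def by simp
    have "path_weight c q = c j j" using x xj unfolding path_weight_def by simp
    then have "ml_coeff E c i j = c i j * ml_coeff E c j j" using p(3) w lj ml_diag[of j] by simp
    then show ?thesis using s(2) lj by auto
  qed
qed

definition rn :: "'v \<Rightarrow> real" where
  "rn i = sqrt (\<Sum>l\<in>UNIV. (ml_coeff E c i l)\<^sup>2)"

lemma rn_pos: "rn i > 0"
proof -
  have "(ml_coeff E c i i)\<^sup>2 \<le> (\<Sum>l\<in>UNIV. (ml_coeff E c i l)\<^sup>2)"
    by (rule member_le_sum) auto
  moreover have "(ml_coeff E c i i)\<^sup>2 > 0" using diag_pos[of i] ml_diag[of i] by simp
  ultimately have "(\<Sum>l\<in>UNIV. (ml_coeff E c i l)\<^sup>2) > 0" by linarith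
  then show ?thesis unfolding rn_def by simp
qed

lemma rn_step:
  assumes e: "(l, i) \<in> E"
  shows "c i l * rn l < rn i"
proof -
  have cpos: "c i l > 0" using edge_pos[OF e] .
  have li: "l \<noteq> i" using edge_ne[OF e] .
  have ilan: "i \<notin> an E l"
  proof
    assume il: "i \<in> an E l"
    have "i \<in> an E i" using an_trans[OF il an_edge[OF e]] .
    then show False using an_irrefl[OF dag] by blast
  qed
  have z: "ml_coeff E c l i = 0" using ml_zero[of i l] li ilan by auto
  have "(\<Sum>k\<in>UNIV. (c i l * ml_coeff E c l k)\<^sup>2) < (\<Sum>k\<in>UNIV. (ml_coeff E c i k)\<^sup>2)"
  proof (rule sum_strict_mono_ex1)
    show "\<forall>k\<in>UNIV. (c i l * ml_coeff E c l k)\<^sup>2 \<le> (ml_coeff E c i k)\<^sup>2"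
    proof
      fix k
      have "0 \<le> c i l * ml_coeff E c l k" using cpos ml_nonneg[of l k] by simp
      then show "(c i l * ml_coeff E c l k)\<^sup>2 \<le> (ml_coeff E c i k)\<^sup>2"
        by (rule power_mono[OF ml_step[OF e, of k]])
    qed
    show "\<exists>k\<in>UNIV. (c i l * ml_coeff E c l k)\<^sup>2 < (ml_coeff E c i k)\<^sup>2"
      using z ml_diag[of i] diag_pos[of i] by (intro bexI[of _ i]) auto
  qed simp
  then have "sqrt (\<Sum>k\<in>UNIV. (c i l * ml_coeff E c l k)\<^sup>2) < rn i"
    unfolding rn_def by (rule real_sqrt_less_mono)
  moreover have "sqrt (\<Sum>k\<in>UNIV. (c i l * ml_coeff E c l k)\<^sup>2) = c i l * rn l"
    unfolding rn_def using cpos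
    by (simp add: power_mult_distrib sum_distrib_left[symmetric] real_sqrt_mult)
  ultimately show ?thesis by simp
qed

lemma ratio_arith:
  fixes m u v x y t :: real
  assumes "0 < u" "0 < v" "0 < x" "0 < y" "m \<le> y * x" "y * u < v" "x / u \<le> t"
  shows "m / v < t"
proof -
  have "m / v \<le> y * x / v" using assms by (simp add: divide_right_mono)
  also have "\<dots> < y * x / (y * u)"
    using assms by (intro divide_strict_left_mono) auto
  also have "\<dots> = x / u" using assms by simp
  finally show ?thesis using assms by simp
qed

lemma ratio:
  assumes "j \<in> an E i"
  shows "ml_coeff E c i j / rn i < c j j / rn j"
proof -
  have finE: "finite E" by simp
  have wfE: "wf E" using finite_acyclic_wf[OF finE dag] .
  show ?thesis using assms
  proof (induction i rule: wf_induct_rule[OF wfE])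
    case (1 i)
    obtain l where l: "(l, i) \<in> E" "l = j \<or> j \<in> an E l" "ml_coeff E c i j \<le> c i l * ml_coeff E c l j"
      using ml_back[OF "1.prems"] by blast
    have st: "c i l * rn l < rn i" using rn_step[OF l(1)] .
    show ?case
    proof (cases "l = j")
      case True
      show ?thesis
        using ratio_arith[of "rn j" "rn i" "c j j" "c i j" "ml_coeff E c i j" "c j j / rn j"]
          rn_pos diag_pos edge_pos[OF l(1)] l(3) st True ml_diag[of j] by (simp add: mult.commute)
    next
      case False
      then have jl: "j \<in> an E l" using l(2) by simp
      have ih: "ml_coeff E c l j / rn l < c j j / rn j" using "1.IH"[OF l(1) jl] .
      show ?thesis
        using ratio_arith[of "rn l" "rn i" "ml_coeff E c l j" "c i l" "ml_coeff E c i j" "c j j / rn j"]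
          rn_pos edge_pos[OF l(1)] l(3) st ih ml_an_pos[OF jl] by simp
    qed
  qed
qed

lemma std_eq: "std_coeff E c i k = ml_coeff E c i k / rn i"
  unfolding std_coeff_def rn_def by simp

lemma A_nonneg: "std_coeff E c i k \<ge> 0"
  unfolding std_eq by (rule divide_nonneg_pos[OF ml_nonneg rn_pos])

lemma A_pos_iff: "std_coeff E c i k > 0 \<longleftrightarrow> k = i \<or> k \<in> an E i"
  unfolding std_eq using ml_pos_iff rn_pos[of i]
  by (simp add: zero_less_divide_iff)

lemma A_diag: assumes "l \<noteq> k" shows "std_coeff E c l k < std_coeff E c k k"
proof (cases "k \<in> an E l")
  case True
  then show ?thesis unfolding std_eq using ratio[OF True] ml_diag[of k] by simp
next
  case False
  then have "std_coeff E c l k = 0" unfolding std_eq using ml_zero[of k l] assms by simp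
  moreover have "std_coeff E c k k > 0" using A_pos_iff by simp
  ultimately show ?thesis by simp
qed

lemma col_pos: "col_norm (std_coeff E c) k > 0"
proof -
  have "(std_coeff E c k k)\<^sup>2 \<le> (\<Sum>l\<in>UNIV. (std_coeff E c l k)\<^sup>2)"
    by (rule member_le_sum) auto
  moreover have "(std_coeff E c k k)\<^sup>2 > 0" using A_pos_iff[of k k] by simp
  ultimately have "(\<Sum>l\<in>UNIV. (std_coeff E c l k)\<^sup>2) > 0" by linarith
  then show ?thesis unfolding col_norm_def by simp
qed

end



lemma max_wM3:
  fixes w :: "'v::finite \<Rightarrow> real"
  assumes ij: "i \<noteq> j" and iO: "i \<notin> Obs" and s: "s \<ge> 0"
  shows "(MAX l\<in>UNIV. (wM3 i s j Obs l)\<^sup>2 * (w l)\<^sup>2)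
       = max ((w i)\<^sup>2) (s\<^sup>2 * (MAX l\<in>UNIV. (wM2 j Obs l)\<^sup>2 * (w l)\<^sup>2))"
proof -
  define h2 where "h2 = (\<lambda>l. (wM2 j Obs l)\<^sup>2 * (w l)\<^sup>2)"
  define M where "M = (MAX l\<in>UNIV. h2 l)"
  have eqi: "(wM3 i s j Obs i)\<^sup>2 * (w i)\<^sup>2 = (w i)\<^sup>2"
    using ij iO by (simp add: wM3_def)
  have eqo: "\<And>l. l \<noteq> i \<Longrightarrow> (wM3 i s j Obs l)\<^sup>2 * (w l)\<^sup>2 = s\<^sup>2 * h2 l"
    using ij iO s by (auto simp: wM3_def wM2_def h2_def power_mult_distrib max_def)
  have ub: "\<And>l. h2 l \<le> M" unfolding M_def by simp
  have "M \<in> range h2" unfolding M_def by (rule Max_in) auto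
  then obtain l0 where l0: "h2 l0 = M" by auto
  have h2i: "h2 i = 0" using ij iO by (simp add: h2_def wM2_def)
  have "(MAX l\<in>UNIV. (wM3 i s j Obs l)\<^sup>2 * (w l)\<^sup>2) = max ((w i)\<^sup>2) (s\<^sup>2 * M)"
  proof (rule Max_eqI)
    show "finite (range (\<lambda>l. (wM3 i s j Obs l)\<^sup>2 * (w l)\<^sup>2))" by simp
  next
    fix y assume "y \<in> range (\<lambda>l. (wM3 i s j Obs l)\<^sup>2 * (w l)\<^sup>2)"
    then obtain l where y: "y = (wM3 i s j Obs l)\<^sup>2 * (w l)\<^sup>2" by auto
    show "y \<le> max ((w i)\<^sup>2) (s\<^sup>2 * M)"
    proof (cases "l = i")
      case True then show ?thesis unfolding y True eqi by simp
    next
      case False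
      have "s\<^sup>2 * h2 l \<le> s\<^sup>2 * M" using ub[of l] by (simp add: mult_left_mono)
      then show ?thesis unfolding y eqo[OF False] by simp
    qed
  next
    show "max ((w i)\<^sup>2) (s\<^sup>2 * M) \<in> range (\<lambda>l. (wM3 i s j Obs l)\<^sup>2 * (w l)\<^sup>2)"
    proof (cases "s\<^sup>2 * M \<le> (w i)\<^sup>2")
      case True
      then have "max ((w i)\<^sup>2) (s\<^sup>2 * M) = (w i)\<^sup>2" by (rule max_absorb1)
      then have "max ((w i)\<^sup>2) (s\<^sup>2 * M) = (wM3 i s j Obs i)\<^sup>2 * (w i)\<^sup>2" unfolding eqi .
      then show ?thesis by (rule range_eqI)
    next
      case False
      then have "l0 \<noteq> i" using l0 h2i by auto
      have "(w i)\<^sup>2 \<le> s\<^sup>2 * M" using False by simp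
      then have "max ((w i)\<^sup>2) (s\<^sup>2 * M) = s\<^sup>2 * M" by (rule max_absorb2)
      then have "max ((w i)\<^sup>2) (s\<^sup>2 * M) = (wM3 i s j Obs l0)\<^sup>2 * (w l0)\<^sup>2"
        unfolding eqo[OF \<open>l0 \<noteq> i\<close>] l0 .
      then show ?thesis by (rule range_eqI)
    qed
  qed
  then show ?thesis unfolding M_def h2_def .
qed

lemma term_le:
  fixes I P b :: real
  assumes "0 \<le> I" "0 \<le> P" "1 < b"
  shows "max I (b*P) - max I P \<le> (b-1)*P"
proof -
  have e: "(b-1)*P = b*P - P" by (simp add: algebra_simps)
  have "(b-1)*P \<ge> 0" using assms by simp
  then show ?thesis using e assms unfolding max_def by auto
qed

lemma term_eq:
  fixes I P b :: real
  assumes "0 \<le> I" "0 \<le> P" "1 < b" "I \<le> P \<or> P = 0"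
  shows "max I (b*P) - max I P = (b-1)*P"
proof -
  have e: "(b-1)*P = b*P - P" by (simp add: algebra_simps)
  have "(b-1)*P \<ge> 0" using assms by simp
  then show ?thesis using e assms unfolding max_def by auto
qed

lemma term_lt:
  fixes I P b :: real
  assumes "P < I" "0 < P" "1 < b"
  shows "max I (b*P) - max I P < (b-1)*P"
proof -
  have e: "(b-1)*P = b*P - P" by (simp add: algebra_simps)
  have "(b-1)*P > 0" using assms by simp
  then show ?thesis using e assms unfolding max_def by auto
qed

definition Pk :: "('v::finite \<Rightarrow> 'v \<Rightarrow> real) \<Rightarrow> 'v \<Rightarrow> 'v set \<Rightarrow> 'v \<Rightarrow> real" where
  "Pk A j Obs k = (MAX l\<in>UNIV. (wM2 j Obs l)\<^sup>2 * (A l k / col_norm A k)\<^sup>2)"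

lemma Pk_nonneg: "Pk A j Obs k \<ge> 0"
proof -
  have "Pk A j Obs k \<in> range (\<lambda>l. (wM2 j Obs l)\<^sup>2 * (A l k / col_norm A k)\<^sup>2)"
    unfolding Pk_def by (rule Max_in) auto
  then show ?thesis by auto
qed

lemma Pk_ge: "(wM2 j Obs l)\<^sup>2 * (A l k / col_norm A k)\<^sup>2 \<le> Pk A j Obs k"
  unfolding Pk_def by simp

lemma Pk_in: "\<exists>l. Pk A j Obs k = (wM2 j Obs l)\<^sup>2 * (A l k / col_norm A k)\<^sup>2"
proof -
  have "Pk A j Obs k \<in> range (\<lambda>l. (wM2 j Obs l)\<^sup>2 * (A l k / col_norm A k)\<^sup>2)"
    unfolding Pk_def by (rule Max_in) auto
  then show ?thesis by auto
qed

lemma sigma_decomp: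
  fixes A :: "'v::finite \<Rightarrow> 'v \<Rightarrow> real"
  assumes ij: "i \<noteq> j" and iO: "i \<notin> Obs" and a: "a > 1"
  shows "sigma2 A (wM3 i a j Obs) - sigma2 A (wM3 i 1 j Obs) - (a\<^sup>2-1) * sigma2 A (wM2 j Obs)
    = (\<Sum>k\<in>UNIV. (col_norm A k)\<^sup>2 * (max ((A i k / col_norm A k)\<^sup>2) (a\<^sup>2 * Pk A j Obs k)
          - max ((A i k / col_norm A k)\<^sup>2) (Pk A j Obs k) - (a\<^sup>2-1) * Pk A j Obs k))"
proof -
  have e1: "\<And>k. (MAX l\<in>UNIV. (wM3 i a j Obs l)\<^sup>2 * (A l k / col_norm A k)\<^sup>2)
      = max ((A i k / col_norm A k)\<^sup>2) (a\<^sup>2 * Pk A j Obs k)"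
    unfolding Pk_def by (rule max_wM3[OF ij iO]) (use a in simp)
  have e2': "\<And>k. (MAX l\<in>UNIV. (wM3 i 1 j Obs l)\<^sup>2 * (A l k / col_norm A k)\<^sup>2)
      = max ((A i k / col_norm A k)\<^sup>2) (1\<^sup>2 * Pk A j Obs k)"
    unfolding Pk_def by (rule max_wM3[OF ij iO]) simp
  have e2: "\<And>k. (MAX l\<in>UNIV. (wM3 i 1 j Obs l)\<^sup>2 * (A l k / col_norm A k)\<^sup>2)
      = max ((A i k / col_norm A k)\<^sup>2) (Pk A j Obs k)"
    using e2' by simp
  have s1: "sigma2 A (wM3 i a j Obs) = (\<Sum>k\<in>UNIV. (col_norm A k)\<^sup>2 * max ((A i k / col_norm A k)\<^sup>2) (a\<^sup>2 * Pk A j Obs k))"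
    unfolding sigma2_def angular_integral_def by (simp only: e1)
  have s2: "sigma2 A (wM3 i 1 j Obs) = (\<Sum>k\<in>UNIV. (col_norm A k)\<^sup>2 * max ((A i k / col_norm A k)\<^sup>2) (Pk A j Obs k))"
    unfolding sigma2_def angular_integral_def by (simp only: e2)
  have s3: "sigma2 A (wM2 j Obs) = (\<Sum>k\<in>UNIV. (col_norm A k)\<^sup>2 * Pk A j Obs k)"
    unfolding sigma2_def angular_integral_def Pk_def ..
  have "(\<Sum>k\<in>UNIV. (col_norm A k)\<^sup>2 * (max ((A i k / col_norm A k)\<^sup>2) (a\<^sup>2 * Pk A j Obs k)
          - max ((A i k / col_norm A k)\<^sup>2) (Pk A j Obs k) - (a\<^sup>2-1) * Pk A j Obs k))
      = (\<Sum>k\<in>UNIV. (col_norm A k)\<^sup>2 * max ((A i k / col_norm A k)\<^sup>2) (a\<^sup>2 * Pk A j Obs k)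
          - (col_norm A k)\<^sup>2 * max ((A i k / col_norm A k)\<^sup>2) (Pk A j Obs k)
          - (a\<^sup>2-1) * ((col_norm A k)\<^sup>2 * Pk A j Obs k))"
    by (rule sum.cong) (simp_all add: algebra_simps)
  also have "\<dots> = sigma2 A (wM3 i a j Obs) - sigma2 A (wM3 i 1 j Obs) - (a\<^sup>2-1) * sigma2 A (wM2 j Obs)"
    unfolding s1 s2 s3 by (simp add: sum_subtractf sum_distrib_left)
  finally show ?thesis by simp
qed

lemma key_le:
  fixes A :: "'v::finite \<Rightarrow> 'v \<Rightarrow> real"
  assumes ij: "i \<noteq> j" and iO: "i \<notin> Obs" and a: "a > 1"
  shows "sigma2 A (wM3 i a j Obs) - sigma2 A (wM3 i 1 j Obs) \<le> (a\<^sup>2-1) * sigma2 A (wM2 j Obs)"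
proof -
  have b: "1 < a\<^sup>2" using a by (simp add: one_less_power)
  have "(\<Sum>k\<in>UNIV. (col_norm A k)\<^sup>2 * (max ((A i k / col_norm A k)\<^sup>2) (a\<^sup>2 * Pk A j Obs k)
          - max ((A i k / col_norm A k)\<^sup>2) (Pk A j Obs k) - (a\<^sup>2-1) * Pk A j Obs k)) \<le> 0"
  proof (rule sum_nonpos)
    fix k
    have "max ((A i k / col_norm A k)\<^sup>2) (a\<^sup>2 * Pk A j Obs k)
          - max ((A i k / col_norm A k)\<^sup>2) (Pk A j Obs k) \<le> (a\<^sup>2-1) * Pk A j Obs k"
      by (rule term_le[OF _ Pk_nonneg b]) simp
    then show "(col_norm A k)\<^sup>2 * (max ((A i k / col_norm A k)\<^sup>2) (a\<^sup>2 * Pk A j Obs k)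
          - max ((A i k / col_norm A k)\<^sup>2) (Pk A j Obs k) - (a\<^sup>2-1) * Pk A j Obs k) \<le> 0"
      by (intro mult_nonneg_nonpos) simp_all
  qed
  then show ?thesis using sigma_decomp[OF ij iO a, where A=A] by linarith
qed

lemma key_eq:
  fixes A :: "'v::finite \<Rightarrow> 'v \<Rightarrow> real"
  assumes ij: "i \<noteq> j" and iO: "i \<notin> Obs" and a: "a > 1"
    and h: "\<And>k. (A i k / col_norm A k)\<^sup>2 \<le> Pk A j Obs k \<or> Pk A j Obs k = 0"
  shows "sigma2 A (wM3 i a j Obs) - sigma2 A (wM3 i 1 j Obs) = (a\<^sup>2-1) * sigma2 A (wM2 j Obs)"
proof -
  have b: "1 < a\<^sup>2" using a by (simp add: one_less_power)
  have "(\<Sum>k\<in>UNIV. (col_norm A k)\<^sup>2 * (max ((A i k / col_norm A k)\<^sup>2) (a\<^sup>2 * Pk A j Obs k)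
          - max ((A i k / col_norm A k)\<^sup>2) (Pk A j Obs k) - (a\<^sup>2-1) * Pk A j Obs k)) = 0"
  proof (rule sum.neutral, rule ballI)
    fix k
    have "max ((A i k / col_norm A k)\<^sup>2) (a\<^sup>2 * Pk A j Obs k)
          - max ((A i k / col_norm A k)\<^sup>2) (Pk A j Obs k) = (a\<^sup>2-1) * Pk A j Obs k"
      by (rule term_eq[OF _ Pk_nonneg b h]) simp
    then show "(col_norm A k)\<^sup>2 * (max ((A i k / col_norm A k)\<^sup>2) (a\<^sup>2 * Pk A j Obs k)
          - max ((A i k / col_norm A k)\<^sup>2) (Pk A j Obs k) - (a\<^sup>2-1) * Pk A j Obs k) = 0"
      by simp
  qed
  then show ?thesis using sigma_decomp[OF ij iO a, where A=A] by linarith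
qed

lemma key_lt:
  fixes A :: "'v::finite \<Rightarrow> 'v \<Rightarrow> real"
  assumes ij: "i \<noteq> j" and iO: "i \<notin> Obs" and a: "a > 1"
    and cn: "col_norm A k0 > 0" and h1: "Pk A j Obs k0 < (A i k0 / col_norm A k0)\<^sup>2"
    and h2: "0 < Pk A j Obs k0"
  shows "sigma2 A (wM3 i a j Obs) - sigma2 A (wM3 i 1 j Obs) < (a\<^sup>2-1) * sigma2 A (wM2 j Obs)"
proof -
  have b: "1 < a\<^sup>2" using a by (simp add: one_less_power)
  have "(\<Sum>k\<in>UNIV. (col_norm A k)\<^sup>2 * (max ((A i k / col_norm A k)\<^sup>2) (a\<^sup>2 * Pk A j Obs k)
          - max ((A i k / col_norm A k)\<^sup>2) (Pk A j Obs k) - (a\<^sup>2-1) * Pk A j Obs k)) < (\<Sum>k\<in>(UNIV::'v set). 0)"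
  proof (rule sum_strict_mono_ex1[where g="\<lambda>k. 0"])
    show "\<forall>k\<in>UNIV. (col_norm A k)\<^sup>2 * (max ((A i k / col_norm A k)\<^sup>2) (a\<^sup>2 * Pk A j Obs k)
          - max ((A i k / col_norm A k)\<^sup>2) (Pk A j Obs k) - (a\<^sup>2-1) * Pk A j Obs k) \<le> 0"
    proof
      fix k
      have "max ((A i k / col_norm A k)\<^sup>2) (a\<^sup>2 * Pk A j Obs k)
            - max ((A i k / col_norm A k)\<^sup>2) (Pk A j Obs k) \<le> (a\<^sup>2-1) * Pk A j Obs k"
        by (rule term_le[OF _ Pk_nonneg b]) simp
      then show "(col_norm A k)\<^sup>2 * (max ((A i k / col_norm A k)\<^sup>2) (a\<^sup>2 * Pk A j Obs k)
            - max ((A i k / col_norm A k)\<^sup>2) (Pk A j Obs k) - (a\<^sup>2-1) * Pk A j Obs k) \<le> 0"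
        by (intro mult_nonneg_nonpos) simp_all
    qed
    have "max ((A i k0 / col_norm A k0)\<^sup>2) (a\<^sup>2 * Pk A j Obs k0)
          - max ((A i k0 / col_norm A k0)\<^sup>2) (Pk A j Obs k0) < (a\<^sup>2-1) * Pk A j Obs k0"
      by (rule term_lt[OF h1 h2 b])
    then have "(col_norm A k0)\<^sup>2 * (max ((A i k0 / col_norm A k0)\<^sup>2) (a\<^sup>2 * Pk A j Obs k0)
          - max ((A i k0 / col_norm A k0)\<^sup>2) (Pk A j Obs k0) - (a\<^sup>2-1) * Pk A j Obs k0) < 0"
      using cn by (intro mult_pos_neg) simp_all
    then show "\<exists>k\<in>UNIV. (col_norm A k)\<^sup>2 * (max ((A i k / col_norm A k)\<^sup>2) (a\<^sup>2 * Pk A j Obs k)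
          - max ((A i k / col_norm A k)\<^sup>2) (Pk A j Obs k) - (a\<^sup>2-1) * Pk A j Obs k) < 0"
      by blast
  qed simp
  then show ?thesis using sigma_decomp[OF ij iO a, where A=A] by (simp only: sum.neutral_const)
qed



lemma main_abstract:
  fixes A :: "'v::finite \<Rightarrow> 'v \<Rightarrow> real" and E :: "('v \<times> 'v) set" and Obs :: "'v set" and a :: real
  assumes Ann: "\<And>l k. A l k \<ge> 0"
    and Apos: "\<And>l k. A l k > 0 \<longleftrightarrow> k = l \<or> k \<in> an E l"
    and Adiag: "\<And>l k. l \<noteq> k \<Longrightarrow> A l k < A k k"
    and cn: "\<And>k. col_norm A k > 0"
    and irr: "\<And>j. j \<notin> an E j"
    and a_gt: "a > 1"
    and O_closed: "An E Obs \<inter> (UNIV - Obs) = {}"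
  shows "(\<forall>j \<in> UNIV - Obs. an E j \<inter> (UNIV - Obs) = {} \<longleftrightarrow> cond_star A a Obs j)
    \<and> (\<forall>j \<in> UNIV - Obs. an E j \<inter> (UNIV - Obs) \<noteq> {} \<longrightarrow>
          (\<forall>i \<in> UNIV - (Obs \<union> {j}).
             sigma2 A (wM3 i a j Obs) - sigma2 A (wM3 i 1 j Obs) \<le> (a\<^sup>2 - 1) * sigma2 A (wM2 j Obs))
        \<and> (\<forall>i \<in> (UNIV - Obs) \<inter> an E j.
             sigma2 A (wM3 i a j Obs) - sigma2 A (wM3 i 1 j Obs) < (a\<^sup>2 - 1) * sigma2 A (wM2 j Obs)))
    \<and> (\<forall>j1 \<in> UNIV - Obs. \<forall>j2 \<in> UNIV - Obs. j1 \<noteq> j2 \<and> cond_star A a Obs j1 \<and> cond_star A a Obs j2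
          \<longrightarrow> j1 \<notin> an E j2 \<and> j2 \<notin> an E j1)"
proof -
  have cl: "\<And>u k. u \<in> Obs \<Longrightarrow> k \<in> an E u \<Longrightarrow> k \<in> Obs"
    using O_closed unfolding An_def by blast
  have sq_lt: "\<And>l k. l \<noteq> k \<Longrightarrow> (A l k / col_norm A k)\<^sup>2 < (A k k / col_norm A k)\<^sup>2"
  proof -
    fix l k :: 'v assume "l \<noteq> k"
    then have "A l k / col_norm A k < A k k / col_norm A k"
      using Adiag cn[of k] by (simp add: divide_strict_right_mono)
    moreover have "0 \<le> A l k / col_norm A k" using Ann[of l k] cn[of k] by simp
    ultimately show "(A l k / col_norm A k)\<^sup>2 < (A k k / col_norm A k)\<^sup>2"
      by (simp add: power_strict_mono)
  qed
  have C1: "(A i k / col_norm A k)\<^sup>2 \<le> Pk A j Obs k \<or> Pk A j Obs k = 0"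
    if jO: "j \<notin> Obs" and anj: "an E j \<inter> (UNIV - Obs) = {}" and ij: "i \<noteq> j" and iO: "i \<notin> Obs" for i j k
  proof (cases "Pk A j Obs k = 0")
    case True then show ?thesis by simp
  next
    case False
    obtain l0 where l0: "Pk A j Obs k = (wM2 j Obs l0)\<^sup>2 * (A l0 k / col_norm A k)\<^sup>2"
      using Pk_in by blast
    have w: "wM2 j Obs l0 \<noteq> 0" using False l0 by auto
    then have l0in: "l0 = j \<or> l0 \<in> Obs" unfolding wM2_def by (auto split: if_splits)
    have "A l0 k \<noteq> 0" using False l0 by auto
    then have "A l0 k > 0" using Ann[of l0 k] by linarith
    then have "k = l0 \<or> k \<in> an E l0" using Apos by blast
    then have kin: "k = j \<or> k \<in> Obs" using l0in anj cl by blast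
    then have "wM2 j Obs k = 1" unfolding wM2_def by auto
    then have "(A k k / col_norm A k)\<^sup>2 \<le> Pk A j Obs k" using Pk_ge[of j Obs k A k] by simp
    moreover have "i \<noteq> k" using kin ij iO by blast
    ultimately show ?thesis using sq_lt[of i k] by simp
  qed
  have C2: "Pk A j Obs i < (A i i / col_norm A i)\<^sup>2 \<and> 0 < Pk A j Obs i"
    if jO: "j \<notin> Obs" and ian: "i \<in> an E j" and iO: "i \<notin> Obs" for i j
  proof
    have ij: "i \<noteq> j" using ian irr by blast
    have "A j i > 0" using Apos ian by blast
    then have pos: "0 < (A j i / col_norm A i)\<^sup>2" using cn[of i] by simp
    have "wM2 j Obs j = 1" unfolding wM2_def by simp
    then have "(A j i / col_norm A i)\<^sup>2 \<le> Pk A j Obs i" using Pk_ge[of j Obs j A i] by simp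
    then show "0 < Pk A j Obs i" using pos by linarith
    obtain l0 where l0: "Pk A j Obs i = (wM2 j Obs l0)\<^sup>2 * (A l0 i / col_norm A i)\<^sup>2"
      using Pk_in by blast
    have Aii: "0 < (A i i / col_norm A i)\<^sup>2" using Apos[of i i] cn[of i] by simp
    show "Pk A j Obs i < (A i i / col_norm A i)\<^sup>2"
    proof (cases "l0 = j \<or> l0 \<in> Obs")
      case True
      then have "l0 \<noteq> i" using ij iO by blast
      moreover have "wM2 j Obs l0 = 1" using True unfolding wM2_def by simp
      ultimately show ?thesis using l0 sq_lt[of l0 i] by simp
    next
      case False
      then have "wM2 j Obs l0 = 0" unfolding wM2_def by simp
      then show ?thesis using l0 Aii by simp
    qed
  qed
  have P1: "an E j \<inter> (UNIV - Obs) = {} \<longleftrightarrow> cond_star A a Obs j" if jO: "j \<notin> Obs" for j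
  proof
    assume anj: "an E j \<inter> (UNIV - Obs) = {}"
    show "cond_star A a Obs j" unfolding cond_star_def
    proof
      fix i assume "i \<in> UNIV - (Obs \<union> {j})"
      then have ij: "i \<noteq> j" and iO: "i \<notin> Obs" by auto
      show "sigma2 A (wM3 i a j Obs) - sigma2 A (wM3 i 1 j Obs) = (a\<^sup>2 - 1) * sigma2 A (wM2 j Obs)"
        by (rule key_eq[OF ij iO a_gt C1[OF jO anj ij iO]])
    qed
  next
    assume cs: "cond_star A a Obs j"
    show "an E j \<inter> (UNIV - Obs) = {}"
    proof (rule ccontr)
      assume "an E j \<inter> (UNIV - Obs) \<noteq> {}"
      then obtain i where ian: "i \<in> an E j" and iO: "i \<notin> Obs" by blast
      have ij: "i \<noteq> j" using ian irr by blast
      have c2: "Pk A j Obs i < (A i i / col_norm A i)\<^sup>2" "0 < Pk A j Obs i" using C2[OF jO ian iO] by auto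
      have "sigma2 A (wM3 i a j Obs) - sigma2 A (wM3 i 1 j Obs) < (a\<^sup>2 - 1) * sigma2 A (wM2 j Obs)"
        by (rule key_lt[OF ij iO a_gt cn c2])
      moreover have "sigma2 A (wM3 i a j Obs) - sigma2 A (wM3 i 1 j Obs) = (a\<^sup>2 - 1) * sigma2 A (wM2 j Obs)"
        using cs ij iO unfolding cond_star_def by blast
      ultimately show False by simp
    qed
  qed
  have R1: "\<forall>j \<in> UNIV - Obs. an E j \<inter> (UNIV - Obs) = {} \<longleftrightarrow> cond_star A a Obs j"
    using P1 by blast
  have R2: "\<forall>j \<in> UNIV - Obs. \<forall>i \<in> UNIV - (Obs \<union> {j}).
             sigma2 A (wM3 i a j Obs) - sigma2 A (wM3 i 1 j Obs) \<le> (a\<^sup>2 - 1) * sigma2 A (wM2 j Obs)"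
  proof (intro ballI)
    fix j i assume "j \<in> UNIV - Obs" "i \<in> UNIV - (Obs \<union> {j})"
    then have ij: "i \<noteq> j" and iO: "i \<notin> Obs" by auto
    show "sigma2 A (wM3 i a j Obs) - sigma2 A (wM3 i 1 j Obs) \<le> (a\<^sup>2 - 1) * sigma2 A (wM2 j Obs)"
      by (rule key_le[OF ij iO a_gt])
  qed
  have R3: "\<forall>j \<in> UNIV - Obs. \<forall>i \<in> (UNIV - Obs) \<inter> an E j.
             sigma2 A (wM3 i a j Obs) - sigma2 A (wM3 i 1 j Obs) < (a\<^sup>2 - 1) * sigma2 A (wM2 j Obs)"
  proof (intro ballI)
    fix j i assume jO': "j \<in> UNIV - Obs" and i: "i \<in> (UNIV - Obs) \<inter> an E j"
    then have jO: "j \<notin> Obs" and ian: "i \<in> an E j" and iO: "i \<notin> Obs" by auto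
    have ij: "i \<noteq> j" using ian irr by blast
    have c2: "Pk A j Obs i < (A i i / col_norm A i)\<^sup>2" "0 < Pk A j Obs i" using C2[OF jO ian iO] by auto
    show "sigma2 A (wM3 i a j Obs) - sigma2 A (wM3 i 1 j Obs) < (a\<^sup>2 - 1) * sigma2 A (wM2 j Obs)"
      by (rule key_lt[OF ij iO a_gt cn c2])
  qed
  have R4: "\<forall>j1 \<in> UNIV - Obs. \<forall>j2 \<in> UNIV - Obs. j1 \<noteq> j2 \<and> cond_star A a Obs j1 \<and> cond_star A a Obs j2
          \<longrightarrow> j1 \<notin> an E j2 \<and> j2 \<notin> an E j1"
  proof (intro ballI impI)
    fix j1 j2 assume j1: "j1 \<in> UNIV - Obs" and j2: "j2 \<in> UNIV - Obs"
      and h: "j1 \<noteq> j2 \<and> cond_star A a Obs j1 \<and> cond_star A a Obs j2"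
    show "j1 \<notin> an E j2 \<and> j2 \<notin> an E j1"
    proof
      show "j1 \<notin> an E j2"
      proof
        assume "j1 \<in> an E j2"
        then have "an E j2 \<inter> (UNIV - Obs) \<noteq> {}" using j1 by blast
        then show False using P1[of j2] j2 h by blast
      qed
      show "j2 \<notin> an E j1"
      proof
        assume "j2 \<in> an E j1"
        then have "an E j1 \<inter> (UNIV - Obs) \<noteq> {}" using j2 by blast
        then show False using P1[of j1] j1 h by blast
      qed
    qed
  qed
  show ?thesis using R1 R2 R3 R4 by blast
qed

theorem theorem4p2:
  fixes E :: "('v::finite \<times> 'v) set" and c :: "'v \<Rightarrow> 'v \<Rightarrow> real"
    and a :: real and Obs :: "'v set"
  assumes dag: "acyclic E"
    and edge_pos: "\<And>k i. (k, i) \<in> E \<Longrightarrow> c i k > 0"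
    and diag_pos: "\<And>i. c i i > 0"
    and a_gt: "a > 1"
    and O_closed: "An E Obs \<inter> (UNIV - Obs) = {}"
  defines "A \<equiv> std_coeff E c"
  shows "(\<forall>j \<in> UNIV - Obs. an E j \<inter> (UNIV - Obs) = {} \<longleftrightarrow> cond_star A a Obs j)
    \<and> (\<forall>j \<in> UNIV - Obs. an E j \<inter> (UNIV - Obs) \<noteq> {} \<longrightarrow>
          (\<forall>i \<in> UNIV - (Obs \<union> {j}).
             sigma2 A (wM3 i a j Obs) - sigma2 A (wM3 i 1 j Obs) \<le> (a\<^sup>2 - 1) * sigma2 A (wM2 j Obs))
        \<and> (\<forall>i \<in> (UNIV - Obs) \<inter> an E j.
             sigma2 A (wM3 i a j Obs) - sigma2 A (wM3 i 1 j Obs) < (a\<^sup>2 - 1) * sigma2 A (wM2 j Obs)))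
    \<and> (\<forall>j1 \<in> UNIV - Obs. \<forall>j2 \<in> UNIV - Obs. j1 \<noteq> j2 \<and> cond_star A a Obs j1 \<and> cond_star A a Obs j2
          \<longrightarrow> j1 \<notin> an E j2 \<and> j2 \<notin> an E j1)"
proof (rule main_abstract[OF _ _ _ _ _ a_gt O_closed])
  show "\<And>l k. 0 \<le> A l k" unfolding A_def by (rule A_nonneg[where E=E and c=c, OF dag edge_pos diag_pos])
  show "\<And>l k. 0 < A l k \<longleftrightarrow> k = l \<or> k \<in> an E l" unfolding A_def
    by (rule A_pos_iff[where E=E and c=c, OF dag edge_pos diag_pos])
  show "\<And>l k. l \<noteq> k \<Longrightarrow> A l k < A k k" unfolding A_def
    by (rule A_diag[where E=E and c=c, OF dag edge_pos diag_pos])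
  show "\<And>k. 0 < col_norm A k" unfolding A_def
    by (rule col_pos[where E=E and c=c, OF dag edge_pos diag_pos])
  show "\<And>j. j \<notin> an E j" by (rule an_irrefl[OF dag])
qed


end
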